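(* Let $\beta\in\mathbb{Z}[\mathrm{i}]$ with $|\beta|>1$ and let $(\beta,D)$ be an integral numeration system. Then every eventually periodic configuration $(a_z)_{z\in\mathbb{Z}[\mathrm{i}]}$ is $(\beta,D)$-automatic.
   Context: A configuration is a map from $\mathbb{Z}[\mathrm{i}]$ to a finite set. For finite $D\subset\mathbb{Z}[\mathrm{i}]$ with $0\in D$, a word $w=w_{n-1}\cdots w_0\in D^*$ has value $[w]_\beta=\sum_{j}w_j\beta^j$; $(\beta,D)$ is an integral numeration system if every Gaussian integer has a unique such expansion (up to leading zeros). A configuration is $(\beta,D)$-automatic if there is a deterministic finite automaton with output $(S,D,\delta,s_0,A,\tau)$ (transition map extended to words by $\delta(s,wa)=\delta(\delta(s,w),a)$) with $a_z=\tau(\delta(s_0,w))$ for every $w\in D^*$ with $[w]_\beta=z$. A configuration is eventually periodic if there exist $\mathbb{Z}$-linearly independent $p,q\in\mathbb{Z}[\mathrm{i}]$ and a finite set $F$ with $a_z=a_{z+p}=a_{z+q}$ for all $z\in\mathbb{Z}[\mathrm{i}]\setminus F$. *)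

theory Defs
  imports Complex_Main
begin

definition gauss_ints :: "complex set" where
  "gauss_ints = {z. Re z \<in> \<int> \<and> Im z \<in> \<int>}"

text \<open>A word \<open>w = w_{n-1} \<dots> w_0\<close> is the list \<open>[w_{n-1}, \<dots>, w_0]\<close> (reading order,
  most significant digit first); its value is \<open>\<Sum>j. w_j \<beta>^j\<close>.\<close>
definition word_val :: "complex \<Rightarrow> complex list \<Rightarrow> complex" where
  "word_val \<beta> w = (\<Sum>j<length w. rev w ! j * \<beta> ^ j)"

definition integral_numeration_system :: "complex \<Rightarrow> complex set \<Rightarrow> bool" where
  "integral_numeration_system \<beta> D \<longleftrightarrow>
     \<beta> \<in> gauss_ints \<and> finite D \<and> D \<subseteq> gauss_ints \<and> 0 \<in> D \<and>
     (\<forall>z\<in>gauss_ints. \<exists>w\<in>lists D. word_val \<beta> w = z) \<and>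
     (\<forall>w\<in>lists D. \<forall>w'\<in>lists D. word_val \<beta> w = word_val \<beta> w' \<longrightarrow>
        dropWhile (\<lambda>d. d = 0) w = dropWhile (\<lambda>d. d = 0) w')"

text \<open>Deterministic finite automaton with output (states coded as naturals, finite state set S,
  input alphabet D, transition \<delta>, initial state s0, output map \<tau>; output alphabet \<tau> ` S).
  The extended transition map \<open>\<delta>(s, wa) = \<delta>(\<delta>(s,w),a)\<close> is \<open>foldl \<delta> s w\<close>.\<close>
definition automatic :: "complex \<Rightarrow> complex set \<Rightarrow> (complex \<Rightarrow> 'b) \<Rightarrow> bool" where
  "automatic \<beta> D a \<longleftrightarrow>
     (\<exists>(S :: nat set) \<delta> s0 (\<tau> :: nat \<Rightarrow> 'b).
        finite S \<and> s0 \<in> S \<and> (\<forall>s\<in>S. \<forall>d\<in>D. \<delta> s d \<in> S) \<and>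
        (\<forall>w\<in>lists D. a (word_val \<beta> w) = \<tau> (foldl \<delta> s0 w)))"

definition eventually_periodic :: "(complex \<Rightarrow> 'b) \<Rightarrow> bool" where
  "eventually_periodic a \<longleftrightarrow>
     (\<exists>p\<in>gauss_ints. \<exists>q\<in>gauss_ints. \<exists>F.
        (\<forall>m n :: int. of_int m * p + of_int n * q = 0 \<longrightarrow> m = 0 \<and> n = 0) \<and>
        finite F \<and>
        (\<forall>z\<in>gauss_ints - F. a z = a (z + p) \<and> a z = a (z + q)))"

end

theory Submission imports Defs begin

lemma gi_add[intro]: "x \<in> gauss_ints \<Longrightarrow> y \<in> gauss_ints \<Longrightarrow> x + y \<in> gauss_ints"
  by (auto simp: gauss_ints_def)
lemma gi_diff[intro]: "x \<in> gauss_ints \<Longrightarrow> y \<in> gauss_ints \<Longrightarrow> x - y \<in> gauss_ints"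
  by (auto simp: gauss_ints_def)
lemma gi_uminus[intro]: "x \<in> gauss_ints \<Longrightarrow> - x \<in> gauss_ints"
  by (auto simp: gauss_ints_def)
lemma gi_mult[intro]: "x \<in> gauss_ints \<Longrightarrow> y \<in> gauss_ints \<Longrightarrow> x * y \<in> gauss_ints"
  by (auto simp: gauss_ints_def)
lemma gi_of_int[intro]: "of_int m \<in> gauss_ints"
  by (auto simp: gauss_ints_def)
lemma gi_of_nat[intro]: "of_nat m \<in> gauss_ints"
  by (auto simp: gauss_ints_def)
lemma gi_0[intro]: "0 \<in> gauss_ints"
  by (auto simp: gauss_ints_def)

lemma gi_repr: assumes "v \<in> gauss_ints"
  obtains x y :: int where "v = Complex (of_int x) (of_int y)"
proof -
  from assms obtain x where x: "Re v = of_int x" by (auto simp: gauss_ints_def elim!: Ints_cases)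
  from assms obtain y where y: "Im v = of_int y" by (auto simp: gauss_ints_def elim!: Ints_cases)
  show ?thesis using that[of x y] x y by (simp add: complex_eq_iff)
qed

lemma word_val_snoc: "word_val \<beta> (w @ [d]) = \<beta> * word_val \<beta> w + d"
proof -
  have "word_val \<beta> (w @ [d]) = (\<Sum>j<Suc (length w). (d # rev w) ! j * \<beta> ^ j)"
    by (simp add: word_val_def)
  also have "\<dots> = d + (\<Sum>j<length w. rev w ! j * \<beta> ^ Suc j)"
    by (subst sum.lessThan_Suc_shift) simp
  also have "\<dots> = \<beta> * word_val \<beta> w + d"
    by (simp add: word_val_def sum_distrib_left mult_ac)
  finally show ?thesis .
qed

lemma word_val_Nil: "word_val \<beta> [] = 0" by (simp add: word_val_def)

lemma word_val_gi: "\<beta> \<in> gauss_ints \<Longrightarrow> D \<subseteq> gauss_ints \<Longrightarrow> w \<in> lists D \<Longrightarrow> word_val \<beta> w \<in> gauss_ints"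
proof (induction w rule: rev_induct)
  case Nil then show ?case by (simp add: word_val_Nil gi_0)
next
  case (snoc d w) then show ?case by (auto simp: word_val_snoc)
qed

lemma automatic_from_key:
  fixes K :: "complex \<Rightarrow> 'k" and a :: "complex \<Rightarrow> 'b"
  assumes bG: "\<beta> \<in> gauss_ints" and DG: "D \<subseteq> gauss_ints"
    and fin: "finite (K ` gauss_ints)"
    and cong: "\<And>v v' d. v \<in> gauss_ints \<Longrightarrow> v' \<in> gauss_ints \<Longrightarrow> d \<in> D \<Longrightarrow> K v = K v' \<Longrightarrow> K (\<beta> * v + d) = K (\<beta> * v' + d)"
    and out: "\<And>v v'. v \<in> gauss_ints \<Longrightarrow> v' \<in> gauss_ints \<Longrightarrow> K v = K v' \<Longrightarrow> a v = a v'"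
  shows "automatic \<beta> D a"
proof -
  obtain f :: "'k \<Rightarrow> nat" and n where f: "f ` (K ` gauss_ints) = {i. i < n}" "inj_on f (K ` gauss_ints)"
    using finite_imp_inj_to_nat_seg[OF fin] by blast
  define \<sigma> where "\<sigma> v = f (K v)" for v
  define rep where "rep s = (SOME v. v \<in> gauss_ints \<and> \<sigma> v = s)" for s
  have rep: "rep (\<sigma> v) \<in> gauss_ints \<and> K (rep (\<sigma> v)) = K v" if "v \<in> gauss_ints" for v
  proof -
    have "\<exists>u. u \<in> gauss_ints \<and> \<sigma> u = \<sigma> v" using that by blast
    then have "rep (\<sigma> v) \<in> gauss_ints \<and> \<sigma> (rep (\<sigma> v)) = \<sigma> v"
      unfolding rep_def by (rule someI_ex)
    then show ?thesis using f(2) that unfolding \<sigma>_def by (auto dest: inj_onD)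
  qed
  define S where "S = \<sigma> ` gauss_ints"
  define \<delta> where "\<delta> s d = \<sigma> (\<beta> * rep s + d)" for s d
  define \<tau> where "\<tau> s = a (rep s)" for s
  have \<delta>: "\<delta> (\<sigma> v) d = \<sigma> (\<beta> * v + d)" if "v \<in> gauss_ints" "d \<in> D" for v d
    using rep[OF that(1)] cong[of "rep (\<sigma> v)" v d] that unfolding \<delta>_def \<sigma>_def by auto
  have run: "foldl \<delta> (\<sigma> 0) w = \<sigma> (word_val \<beta> w)" if "w \<in> lists D" for w
    using that
  proof (induction w rule: rev_induct)
    case Nil then show ?case by (simp add: word_val_Nil)
  next
    case (snoc d w)
    then have "w \<in> lists D" "d \<in> D" by auto
    then show ?case using snoc \<delta>[OF word_val_gi[OF bG DG], of w d]
      by (simp add: word_val_snoc)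
  qed
  have "finite S" unfolding S_def \<sigma>_def using fin by (metis finite_imageI image_image)
  moreover have "\<sigma> 0 \<in> S" unfolding S_def by (auto intro: gi_0)
  moreover have "\<forall>s\<in>S. \<forall>d\<in>D. \<delta> s d \<in> S"
    unfolding S_def using \<delta> DG bG by (auto intro!: imageI)
  moreover have "\<forall>w\<in>lists D. a (word_val \<beta> w) = \<tau> (foldl \<delta> (\<sigma> 0) w)"
  proof
    fix w assume w: "w \<in> lists D"
    have vG: "word_val \<beta> w \<in> gauss_ints" using word_val_gi[OF bG DG w] .
    show "a (word_val \<beta> w) = \<tau> (foldl \<delta> (\<sigma> 0) w)"
      unfolding run[OF w] \<tau>_def using rep[OF vG] out vG by metis
  qed
  ultimately show ?thesis unfolding automatic_def by blast
qed


lemma seq_const: assumes "\<And>j. j \<ge> J \<Longrightarrow> s (Suc j) = s j" "j \<ge> J" shows "s j = s J"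
  using assms(2) by (induction j rule: dec_induct) (use assms(1) in auto)

lemma shift_nat:
  assumes "\<And>z. z \<in> gauss_ints \<Longrightarrow> f (z + u) = f z" "u \<in> gauss_ints" "z \<in> gauss_ints"
  shows "f (z + of_nat n * u) = f z"
proof (induction n)
  case 0 then show ?case by simp
next
  case (Suc n)
  have "f (z + of_nat (Suc n) * u) = f ((z + of_nat n * u) + u)" by (simp add: algebra_simps)
  also have "\<dots> = f (z + of_nat n * u)" using assms by (intro assms(1)) auto
  finally show ?case using Suc by simp
qed

lemma shift_int:
  assumes "\<And>z. z \<in> gauss_ints \<Longrightarrow> f (z + u) = f z" "u \<in> gauss_ints" "z \<in> gauss_ints"
  shows "f (z + of_int m * u) = f z"
proof -
  have neg': "f (w + - u) = f w" if "w \<in> gauss_ints" for w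
  proof -
    have wu: "w + - u \<in> gauss_ints" using that assms(2) by (intro gi_add gi_uminus)
    have "f ((w + - u) + u) = f (w + - u)" by (rule assms(1)[OF wu])
    then show ?thesis by simp
  qed
  show ?thesis
  proof (cases "m \<ge> 0")
    case True
    define n where "n = nat m"
    have n: "m = int n" using True by (simp add: n_def)
    have "f (z + of_nat n * u) = f z"
      by (rule shift_nat[where f=f and u=u and z=z and n=n, OF assms(1) assms(2,3)])
    then show ?thesis unfolding n by simp
  next
    case False
    define n where "n = nat (- m)"
    have n: "m = - int n" using False by (simp add: n_def)
    have um: "- u \<in> gauss_ints" using assms(2) by (rule gi_uminus)
    have "f (z + of_nat n * (-u)) = f z"
      by (rule shift_nat[where f=f and u="-u" and z=z and n=n, OF neg' um assms(3)])
    then show ?thesis unfolding n by simp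
  qed
qed

locale epa =
  fixes a :: "complex \<Rightarrow> 'b" and p q :: complex and F :: "complex set"
  assumes pG: "p \<in> gauss_ints" and qG: "q \<in> gauss_ints" and finF: "finite F"
    and per: "\<And>z. z \<in> gauss_ints \<Longrightarrow> z \<notin> F \<Longrightarrow> a z = a (z + p) \<and> a z = a (z + q)"
    and indep: "\<And>m n :: int. of_int m * p + of_int n * q = 0 \<Longrightarrow> m = 0 \<and> n = 0"
begin

lemma p_nz: "p \<noteq> 0" using indep[of 1 0] by auto

lemma ev_clear:
  assumes "P \<noteq> 0" shows "\<exists>J. \<forall>j\<ge>J. z + of_nat j * P \<notin> F"
proof -
  have "inj (\<lambda>j::nat. z + of_nat j * P)" using assms by (auto intro!: injI)
  then have "finite {j. z + of_nat j * P \<in> F}"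
    using finite_vimageI[OF finF] by (simp add: vimage_def)
  then obtain B where "\<forall>j\<in>{j. z + of_nat j * P \<in> F}. j \<le> B"
    using finite_nat_set_iff_bounded_le by blast
  then show ?thesis by (intro exI[of _ "Suc B"]) force
qed

definition bray :: "complex \<Rightarrow> complex \<Rightarrow> 'b" where
  "bray P z = a (z + of_nat (SOME J. \<forall>j\<ge>J. z + of_nat j * P \<notin> F) * P)"

lemma bray_eq:
  assumes P: "P \<noteq> 0" "P \<in> gauss_ints"
    and step: "\<And>w. w \<in> gauss_ints \<Longrightarrow> w \<notin> F \<Longrightarrow> w + P \<notin> F \<Longrightarrow> a w = a (w + P)"
    and z: "z \<in> gauss_ints" and cl: "\<forall>i\<ge>j. z + of_nat i * P \<notin> F"
  shows "bray P z = a (z + of_nat j * P)"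
proof -
  define J where "J = (SOME J. \<forall>j\<ge>J. z + of_nat j * P \<notin> F)"
  have J: "\<forall>i\<ge>J. z + of_nat i * P \<notin> F" unfolding J_def using someI_ex[OF ev_clear[OF P(1)]] .
  define s where "s i = a (z + of_nat i * P)" for i
  have st: "s (Suc i) = s i" if "i \<ge> j" for i
  proof -
    have "a (z + of_nat i * P) = a ((z + of_nat i * P) + P)"
    proof (rule step)
      show "z + of_nat i * P \<in> gauss_ints" using P z by auto
      show "z + of_nat i * P \<notin> F" using that cl by auto
      have "z + of_nat i * P + P = z + of_nat (Suc i) * P" by (simp add: algebra_simps)
      then show "z + of_nat i * P + P \<notin> F" using that cl by (metis le_SucI)
    qed
    then show ?thesis unfolding s_def by (simp add: algebra_simps)
  qed
  have st2: "s (Suc i) = s i" if "i \<ge> J" for i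
  proof -
    have "a (z + of_nat i * P) = a ((z + of_nat i * P) + P)"
    proof (rule step)
      show "z + of_nat i * P \<in> gauss_ints" using P z by auto
      show "z + of_nat i * P \<notin> F" using that J by auto
      have "z + of_nat i * P + P = z + of_nat (Suc i) * P" by (simp add: algebra_simps)
      then show "z + of_nat i * P + P \<notin> F" using that J by (metis le_SucI)
    qed
    then show ?thesis unfolding s_def by (simp add: algebra_simps)
  qed
  have "s (max j J) = s j" by (rule seq_const[of j s]) (use st in auto)
  moreover have "s (max j J) = s J" by (rule seq_const[of J s]) (use st2 in auto)
  ultimately show ?thesis unfolding bray_def J_def[symmetric] s_def by simp
qed


lemma stepp: "w \<in> gauss_ints \<Longrightarrow> w \<notin> F \<Longrightarrow> w + p \<notin> F \<Longrightarrow> a w = a (w + p)"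
  using per by blast

lemma stepm: "w \<in> gauss_ints \<Longrightarrow> w \<notin> F \<Longrightarrow> w + - p \<notin> F \<Longrightarrow> a w = a (w + - p)"
  using per[of "w - p"] pG by (auto simp: gi_diff)

lemma bray_shiftP:
  assumes P: "P \<noteq> 0" "P \<in> gauss_ints"
    and step: "\<And>w. w \<in> gauss_ints \<Longrightarrow> w \<notin> F \<Longrightarrow> w + P \<notin> F \<Longrightarrow> a w = a (w + P)"
    and z: "z \<in> gauss_ints"
  shows "bray P (z + P) = bray P z"
proof -
  obtain J where J: "\<forall>j\<ge>J. z + of_nat j * P \<notin> F" using ev_clear[OF P(1)] by blast
  have e: "z + P + of_nat i * P = z + of_nat (Suc i) * P" for i by (simp add: algebra_simps)
  have "bray P z = a (z + of_nat (Suc J) * P)" by (rule bray_eq[OF P step z]) (use J in auto)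
  moreover have "bray P (z + P) = a (z + P + of_nat J * P)"
  proof (rule bray_eq[OF P step])
    show "z + P \<in> gauss_ints" using z P by auto
    show "\<forall>i\<ge>J. z + P + of_nat i * P \<notin> F" unfolding e using J by (metis le_SucI)
  qed
  ultimately show ?thesis using e by simp
qed

lemma bray_shiftq:
  assumes P: "P \<noteq> 0" "P \<in> gauss_ints"
    and step: "\<And>w. w \<in> gauss_ints \<Longrightarrow> w \<notin> F \<Longrightarrow> w + P \<notin> F \<Longrightarrow> a w = a (w + P)"
    and z: "z \<in> gauss_ints"
  shows "bray P (z + q) = bray P z"
proof -
  obtain J1 where J1: "\<forall>j\<ge>J1. z + of_nat j * P \<notin> F" using ev_clear[OF P(1)] by blast
  obtain J2 where J2: "\<forall>j\<ge>J2. z + q + of_nat j * P \<notin> F" using ev_clear[OF P(1)] by blast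
  define J where "J = max J1 J2"
  have "bray P z = a (z + of_nat J * P)" by (rule bray_eq[OF P step z]) (use J1 in \<open>auto simp: J_def\<close>)
  moreover have "bray P (z + q) = a (z + q + of_nat J * P)"
    by (rule bray_eq[OF P step]) (use J2 z qG in \<open>auto simp: J_def\<close>)
  moreover have "a (z + of_nat J * P) = a (z + of_nat J * P + q)"
    using per[of "z + of_nat J * P"] J1 z P by (auto simp: J_def)
  ultimately show ?thesis by (simp add: algebra_simps)
qed

lemma mp_nz: "- p \<noteq> 0" using p_nz by simp

lemma bp_p: "z \<in> gauss_ints \<Longrightarrow> bray p (z + p) = bray p z"
  by (rule bray_shiftP[OF p_nz pG stepp])
lemma bp_q: "z \<in> gauss_ints \<Longrightarrow> bray p (z + q) = bray p z"
  by (rule bray_shiftq[OF p_nz pG stepp])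
lemma bm_q: "z \<in> gauss_ints \<Longrightarrow> bray (-p) (z + q) = bray (-p) z"
  by (rule bray_shiftq[OF mp_nz _ stepm]) (use pG in auto)

lemma line_clear: "\<exists>M::nat. \<forall>j::int. z + of_nat M * q + of_int j * p \<notin> F"
proof -
  define S where "S = {M::nat. \<exists>j::int. z + of_nat M * q + of_int j * p \<in> F}"
  define h where "h M = (SOME f. f \<in> F \<and> (\<exists>j::int. z + of_nat M * q + of_int j * p = f))" for M
  have h: "h M \<in> F \<and> (\<exists>j::int. z + of_nat M * q + of_int j * p = h M)" if "M \<in> S" for M
    unfolding h_def by (rule someI_ex) (use that in \<open>auto simp: S_def\<close>)
  have "inj_on h S"
  proof (rule inj_onI)
    fix M M' assume M: "M \<in> S" "M' \<in> S" "h M = h M'"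
    obtain j where j: "z + of_nat M * q + of_int j * p = h M" using h[OF M(1)] by blast
    obtain j' where j': "z + of_nat M' * q + of_int j' * p = h M'" using h[OF M(2)] by blast
    have e: "z + of_nat M * q + of_int j * p = z + of_nat M' * q + of_int j' * p"
      using j j' M(3) by simp
    have "of_int (j - j') * p + of_int (int M - int M') * q
        = (z + of_nat M * q + of_int j * p) - (z + of_nat M' * q + of_int j' * p)"
      by (simp add: algebra_simps)
    then have "of_int (j - j') * p + of_int (int M - int M') * q = 0" using e by simp
    then have "int M - int M' = 0" using indep by blast
    then show "M = M'" by simp
  qed
  moreover have "h ` S \<subseteq> F" using h by blast
  ultimately have "finite S" using finF by (rule inj_on_finite)
  then obtain M where "M \<notin> S" using ex_new_if_finite[OF infinite_UNIV_nat] by blast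
  then show ?thesis unfolding S_def by blast
qed

lemma bp_bm: assumes z: "z \<in> gauss_ints" shows "bray p z = bray (-p) z"
proof -
  obtain M where M: "\<forall>j::int. z + of_nat M * q + of_int j * p \<notin> F" using line_clear by blast
  define z' where "z' = z + of_nat M * q"
  have z'G: "z' \<in> gauss_ints" using z qG by (auto simp: z'_def)
  have c1: "z' + of_nat i * p \<notin> F" for i using M[rule_format, of "int i"] by (simp add: z'_def)
  have c2: "z' + of_nat i * (-p) \<notin> F" for i using M[rule_format, of "- int i"] by (simp add: z'_def)
  have "bray p z' = a (z' + of_nat 0 * p)" by (rule bray_eq[OF p_nz pG stepp z'G]) (use c1 in auto)
  moreover have "bray (-p) z' = a (z' + of_nat 0 * (-p))"
    by (rule bray_eq[OF mp_nz _ stepm z'G]) (use c2 pG in auto)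
  moreover have "bray p z' = bray p z" unfolding z'_def
    by (rule shift_nat[where f="bray p", OF bp_q qG z])
  moreover have "bray (-p) z' = bray (-p) z" unfolding z'_def
    by (rule shift_nat[where f="bray (-p)", OF bm_q qG z])
  ultimately show ?thesis by simp
qed

lemma bp_per: assumes z: "z \<in> gauss_ints"
  shows "bray p (z + of_int m * p + of_int n * q) = bray p z"
proof -
  have zm: "z + of_int m * p \<in> gauss_ints" using z pG by auto
  have "bray p (z + of_int m * p + of_int n * q) = bray p (z + of_int m * p)"
    by (rule shift_int[where f="bray p", OF bp_q qG zm])
  also have "\<dots> = bray p z"
    by (rule shift_int[where f="bray p", OF bp_p pG z])
  finally show ?thesis .
qed

definition r0 where "r0 = (\<Sum>f\<in>F. cmod f)"

lemma F_bound: "f \<in> F \<Longrightarrow> cmod f \<le> r0"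
  unfolding r0_def by (rule member_le_sum) (use finF in auto)

lemma far: assumes v: "v \<in> gauss_ints" and big: "cmod v > r0"
  shows "a v = bray p v"
proof (cases "\<forall>i::nat. v + of_nat i * p \<notin> F")
  case True
  have "bray p v = a (v + of_nat 0 * p)" by (rule bray_eq[OF p_nz pG stepp v]) (use True in auto)
  then show ?thesis by simp
next
  case False
  then obtain j where j: "v + of_nat j * p \<in> F" by blast
  have vF: "v \<notin> F" using F_bound big by force
  have c2: "v + of_nat i * (-p) \<notin> F" if "i \<ge> 1" for i
  proof
    assume k: "v + of_nat i * (-p) \<in> F"
    have j1: "j \<ge> 1" using j vF by (cases j) auto
    have eq: "of_nat (j + i) * v = of_nat i * (v + of_nat j * p) + of_nat j * (v + of_nat i * (-p))"
      by (simp add: algebra_simps)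
    have "real (j + i) * cmod v = cmod (of_nat (j + i) * v)" by (metis norm_mult norm_of_nat)
    also have "\<dots> \<le> cmod (of_nat i * (v + of_nat j * p)) + cmod (of_nat j * (v + of_nat i * (-p)))"
      unfolding eq by (rule norm_triangle_ineq)
    also have "\<dots> = real i * cmod (v + of_nat j * p) + real j * cmod (v + of_nat i * (-p))"
      by (simp add: norm_mult)
    also have "\<dots> \<le> real i * r0 + real j * r0"
      by (intro add_mono mult_left_mono F_bound j k) auto
    finally have "real (j + i) * cmod v \<le> real (j + i) * r0" by (simp add: algebra_simps)
    then have "cmod v \<le> r0" using j1 by simp
    then show False using big by simp
  qed
  have "bray (-p) v = a (v + of_nat 1 * (-p))"
    by (rule bray_eq[OF mp_nz _ stepm v]) (use c2 pG in auto)
  moreover have "a (v - p) = a v" using per[of "v - p"] c2[of 1] v pG by (auto simp: gi_diff)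
  ultimately show ?thesis using bp_bm[OF v] by simp
qed

end


lemma det_nz:
  fixes p1 p2 q1 q2 :: int
  assumes indep: "\<And>m n :: int. of_int m * Complex (of_int p1) (of_int p2) + of_int n * Complex (of_int q1) (of_int q2) = 0 \<Longrightarrow> m = 0 \<and> n = 0"
  shows "p1 * q2 - p2 * q1 \<noteq> 0"
proof
  assume D: "p1 * q2 - p2 * q1 = 0"
  have D': "real_of_int p1 * real_of_int q2 - real_of_int p2 * real_of_int q1 = 0"
    using D by (metis of_int_0 of_int_diff of_int_mult)
  have z: "of_int m * Complex (of_int p1) (of_int p2) + of_int n * Complex (of_int q1) (of_int q2) = 0"
    if "real_of_int m * p1 + real_of_int n * q1 = 0" "real_of_int m * p2 + real_of_int n * q2 = 0" for m n
    using that by (simp add: complex_eq_iff)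
  show False
  proof (cases "q2 = 0 \<and> p2 = 0")
    case False
    have "q2 = 0 \<and> - p2 = 0"
      by (rule indep[OF z]) (use D' in \<open>auto simp: algebra_simps\<close>)
    then show False using False by simp
  next
    case T: True
    show False
    proof (cases "q1 = 0 \<and> p1 = 0")
      case False
      have "q1 = 0 \<and> - p1 = 0"
        by (rule indep[OF z]) (use T in \<open>auto simp: algebra_simps\<close>)
      then show False using False by simp
    next
      case True
      have "(1::int) = 0 \<and> (0::int) = 0" by (rule indep[OF z]) (use T True in auto)
      then show False by simp
    qed
  qed
qed

lemma small_finite: "finite {v \<in> gauss_ints. cmod v \<le> R}"
proof -
  define C where "C = \<lceil>R\<rceil>"
  have "{v \<in> gauss_ints. cmod v \<le> R} \<subseteq> (\<lambda>(x,y). Complex (of_int x) (of_int y)) ` ({-C..C} \<times> {-C..C})"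
  proof
    fix v assume v: "v \<in> {v \<in> gauss_ints. cmod v \<le> R}"
    then obtain x y :: int where xy: "v = Complex (of_int x) (of_int y)" using gi_repr by blast
    have "\<bar>Re v\<bar> \<le> R" "\<bar>Im v\<bar> \<le> R" using v abs_Re_le_cmod abs_Im_le_cmod by (auto intro: order_trans)
    then have "\<bar>real_of_int x\<bar> \<le> R" "\<bar>real_of_int y\<bar> \<le> R" using xy by auto
    then have "x \<in> {-C..C}" "y \<in> {-C..C}" unfolding C_def
      by (auto simp: abs_le_iff le_ceiling_iff ceiling_le_iff intro: ceiling_mono)
         (linarith+)
    then show "v \<in> (\<lambda>(x,y). Complex (of_int x) (of_int y)) ` ({-C..C} \<times> {-C..C})"
      using xy by force
  qed
  then show ?thesis by (rule finite_subset) auto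
qed


theorem lemma5p1:
  fixes \<beta> :: complex and D :: "complex set" and a :: "complex \<Rightarrow> 'b"
  assumes "\<beta> \<in> gauss_ints" and "cmod \<beta> > 1"
    and "integral_numeration_system \<beta> D"
    and "finite (a ` gauss_ints)"
    and "eventually_periodic a"
  shows "automatic \<beta> D a"
proof -
  have bG: "\<beta> \<in> gauss_ints" by fact
  have DG: "D \<subseteq> gauss_ints" and finD: "finite D"
    using assms(3) unfolding integral_numeration_system_def by auto
  obtain p q F where pG: "p \<in> gauss_ints" and qG: "q \<in> gauss_ints"
    and indep: "\<And>m n :: int. of_int m * p + of_int n * q = 0 \<Longrightarrow> m = 0 \<and> n = 0"
    and finF: "finite F" and per: "\<forall>z\<in>gauss_ints - F. a z = a (z + p) \<and> a z = a (z + q)"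
    using assms(5) unfolding eventually_periodic_def by blast
  interpret E: epa a p q F
    by unfold_locales (use pG qG finF per indep in \<open>auto simp del: Diff_iff\<close>)
  obtain p1 p2 where p: "p = Complex (of_int p1) (of_int p2)" using gi_repr[OF pG] by blast
  obtain q1 q2 where q: "q = Complex (of_int q1) (of_int q2)" using gi_repr[OF qG] by blast
  obtain b1 b2 where b: "\<beta> = Complex (of_int b1) (of_int b2)" using gi_repr[OF bG] by blast
  define \<Delta> where "\<Delta> = p1 * q2 - p2 * q1"
  have \<Delta>nz: "\<Delta> \<noteq> 0" unfolding \<Delta>_def by (rule det_nz) (use indep in \<open>auto simp: p q\<close>)
  define N where "N = \<bar>\<Delta>\<bar>"
  have Npos: "N > 0" using \<Delta>nz by (simp add: N_def)
  define Dm where "Dm = (\<Sum>d\<in>D. cmod d)"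
  have Dm: "cmod d \<le> Dm" if "d \<in> D" for d
    unfolding Dm_def by (rule member_le_sum) (use finD that in auto)
  define R where "R = max E.r0 (Dm / (cmod \<beta> - 1))"
  have R1: "R \<ge> E.r0" and R2: "R * (cmod \<beta> - 1) \<ge> Dm"
    using assms(2) by (auto simp: R_def field_simps max_def)
  have grow: "cmod (\<beta> * v + d) > R" if "cmod v > R" "d \<in> D" for v d
  proof -
    have "cmod (\<beta> * v) - cmod d \<le> cmod (\<beta> * v + d)"
      using norm_triangle_ineq4[of "\<beta> * v + d" d] by simp
    moreover have "cmod (\<beta> * v) = cmod \<beta> * cmod v" by (simp add: norm_mult)
    moreover have "(cmod \<beta> - 1) * cmod v \<ge> (cmod \<beta> - 1) * R"
      using that assms(2) by (intro mult_left_mono) auto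
    ultimately show ?thesis using Dm[OF that(2)] R2 that(1) by (simp add: algebra_simps)
  qed
  define K where "K v = (if cmod v \<le> R then Inl v else Inr (\<lfloor>Re v\<rfloor> mod N, \<lfloor>Im v\<rfloor> mod N))" for v
  show ?thesis
  proof (rule automatic_from_key[OF bG DG, where K = K])
    have "K ` gauss_ints \<subseteq> Inl ` {v \<in> gauss_ints. cmod v \<le> R} \<union> Inr ` ({0..<N} \<times> {0..<N})"
      using Npos by (auto simp: K_def)
    then show "finite (K ` gauss_ints)"
      by (rule finite_subset) (use small_finite in auto)
  next
    fix v v' d assume v: "v \<in> gauss_ints" and v': "v' \<in> gauss_ints" and d: "d \<in> D" and K: "K v = K v'"
    show "K (\<beta> * v + d) = K (\<beta> * v' + d)"
    proof (cases "cmod v \<le> R")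
      case True
      then have "v = v'" using K by (auto simp: K_def split: if_splits)
      then show ?thesis by simp
    next
      case False
      then have big': "\<not> cmod v' \<le> R" using K by (auto simp: K_def split: if_splits)
      obtain x y where xy: "v = Complex (of_int x) (of_int y)" using gi_repr[OF v] by blast
      obtain x' y' where xy': "v' = Complex (of_int x') (of_int y')" using gi_repr[OF v'] by blast
      obtain d1 d2 where dd: "d = Complex (of_int d1) (of_int d2)" using gi_repr d DG by blast
      have m: "x mod N = x' mod N" "y mod N = y' mod N" using K False big' by (auto simp: K_def xy xy')
      then have dv: "N dvd x - x'" "N dvd y - y'" by (simp_all add: mod_eq_dvd_iff)
      have e1: "(b1 * x - b2 * y + d1) - (b1 * x' - b2 * y' + d1) = b1 * (x - x') - b2 * (y - y')"
        by (simp add: algebra_simps)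
      have e2: "(b2 * x + b1 * y + d2) - (b2 * x' + b1 * y' + d2) = b2 * (x - x') + b1 * (y - y')"
        by (simp add: algebra_simps)
      have "N dvd (b1 * x - b2 * y + d1) - (b1 * x' - b2 * y' + d1)"
        unfolding e1 by (intro dvd_diff dvd_mult dv)
      moreover have "N dvd (b2 * x + b1 * y + d2) - (b2 * x' + b1 * y' + d2)"
        unfolding e2 by (intro dvd_add dvd_mult dv)
      ultimately have mm: "(b1 * x - b2 * y + d1) mod N = (b1 * x' - b2 * y' + d1) mod N"
          "(b2 * x + b1 * y + d2) mod N = (b2 * x' + b1 * y' + d2) mod N"
        by (simp_all add: mod_eq_dvd_iff)
      have g1: "\<not> cmod (\<beta> * v + d) \<le> R" "\<not> cmod (\<beta> * v' + d) \<le> R"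
        using grow[of v d] grow[of v' d] False big' d by auto
      have r: "\<beta> * v + d = Complex (of_int (b1 * x - b2 * y + d1)) (of_int (b2 * x + b1 * y + d2))"
        "\<beta> * v' + d = Complex (of_int (b1 * x' - b2 * y' + d1)) (of_int (b2 * x' + b1 * y' + d2))"
        by (simp_all add: b xy xy' dd complex_eq_iff)
      have f: "\<lfloor>Re (\<beta> * v + d)\<rfloor> = b1 * x - b2 * y + d1" "\<lfloor>Im (\<beta> * v + d)\<rfloor> = b2 * x + b1 * y + d2"
        "\<lfloor>Re (\<beta> * v' + d)\<rfloor> = b1 * x' - b2 * y' + d1" "\<lfloor>Im (\<beta> * v' + d)\<rfloor> = b2 * x' + b1 * y' + d2"
        unfolding r complex.sel floor_of_int by (rule refl)+
      show ?thesis by (simp only: K_def g1 if_False f mm)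
    qed
  next
    fix v v' assume v: "v \<in> gauss_ints" and v': "v' \<in> gauss_ints" and K: "K v = K v'"
    show "a v = a v'"
    proof (cases "cmod v \<le> R")
      case True
      then have "v = v'" using K by (auto simp: K_def split: if_splits)
      then show ?thesis by simp
    next
      case False
      then have big': "\<not> cmod v' \<le> R" using K by (auto simp: K_def split: if_splits)
      obtain x y where xy: "v = Complex (of_int x) (of_int y)" using gi_repr[OF v] by blast
      obtain x' y' where xy': "v' = Complex (of_int x') (of_int y')" using gi_repr[OF v'] by blast
      have m: "x' mod N = x mod N" "y' mod N = y mod N" using K False big' by (auto simp: K_def xy xy')
      then have "N dvd x' - x" "N dvd y' - y" by (simp_all add: mod_eq_dvd_iff)
      then have "\<Delta> dvd x' - x" "\<Delta> dvd y' - y" by (simp_all add: N_def)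
      then obtain s t where s: "x' - x = \<Delta> * s" and t: "y' - y = \<Delta> * t" by (auto elim!: dvdE)
      define m where "m = s * q2 - t * q1"
      define n where "n = t * p1 - s * p2"
      have "of_int m * p + of_int n * q = v' - v"
      proof -
        have "m * p1 + n * q1 = x' - x" "m * p2 + n * q2 = y' - y"
          unfolding s t m_def n_def \<Delta>_def by (simp_all add: algebra_simps)
        then have "real_of_int (m * p1 + n * q1) = real_of_int (x' - x)"
          "real_of_int (m * p2 + n * q2) = real_of_int (y' - y)" by simp_all
        then show ?thesis by (simp add: p q xy xy' complex_eq_iff)
      qed
      then have vv: "v' = v + of_int m * p + of_int n * q" by (simp add: algebra_simps)
      have "a v = E.bray p v" using E.far[OF v] False R1 by simp
      also have "\<dots> = E.bray p v'" unfolding vv using E.bp_per[OF v] by simp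
      also have "\<dots> = a v'" using E.far[OF v'] big' R1 by simp
      finally show ?thesis .
    qed
  qed
qed

end
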